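(* Let $\beta\in[0,1)$, let $S:\mathbb R^n\to\mathbb R^n$ be a $\beta$-contraction and $T:\mathbb R^n\to\mathbb R^n$ a nonexpansive mapping with $\operatorname{Fix}(T)\ne\emptyset$. Let $\alpha_k=\min\{2/(k(1-\beta)),1\}$ for $k\ge1$, and let $\mathbf x^0\in\mathbb R^n$ and, for $k\ge1$, $\mathbf y^k=T(\mathbf x^{k-1})$, $\mathbf z^k=S(\mathbf x^{k-1})$, $\mathbf x^k=\alpha_k\mathbf z^k+(1-\alpha_k)\mathbf y^k$. Then for any $\tilde{\mathbf x}\in\operatorname{Fix}(T)$ and all $k\ge1$, $$\|\mathbf x^k-\mathbf x^{k-1}\|\le\frac{2C_{\tilde{\mathbf x}}J}{(1-\beta)k},\qquad \|\mathbf y^k-\mathbf x^{k-1}\|\le\frac{2C_{\tilde{\mathbf x}}(J+2)}{(1-\beta)k},$$ where $J=\lfloor 2/(1-\beta)\rfloor$ and $C_{\tilde{\mathbf x}}=\max\{\|\mathbf x^0-\tilde{\mathbf x}\|,\ \frac{1}{1-\beta}\|\tilde{\mathbf x}-S(\tilde{\mathbf x})\|\}$. In particular both sequences tend to $0$.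
   Context: A mapping $S$ is a $\beta$-contraction if $\|S(\mathbf x)-S(\mathbf y)\|\le\beta\|\mathbf x-\mathbf y\|$ for all $\mathbf x,\mathbf y$; $T$ is nonexpansive if this holds with constant $1$. $\operatorname{Fix}(T)=\{\mathbf x:T(\mathbf x)=\mathbf x\}$. *)

theory Defs
  imports "HOL-Analysis.Analysis"
begin

end

theory Submission
  imports Defs
begin

theorem lemma4p3:
  fixes \<beta> :: real
    and S T :: "real ^ 'n \<Rightarrow> real ^ 'n"
    and \<alpha> :: "nat \<Rightarrow> real"
    and x y z :: "nat \<Rightarrow> real ^ 'n"
    and xt :: "real ^ 'n"
  assumes beta: "0 \<le> \<beta>" "\<beta> < 1"
    and S_contr: "\<And>u v. norm (S u - S v) \<le> \<beta> * norm (u - v)"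
    and T_nonexp: "\<And>u v. norm (T u - T v) \<le> norm (u - v)"
    and fix_ne: "{u. T u = u} \<noteq> {}"
    and alpha_def: "\<And>k. k \<ge> 1 \<Longrightarrow> \<alpha> k = min (2 / (real k * (1 - \<beta>))) 1"
    and y_def: "\<And>k. k \<ge> 1 \<Longrightarrow> y k = T (x (k - 1))"
    and z_def: "\<And>k. k \<ge> 1 \<Longrightarrow> z k = S (x (k - 1))"
    and x_def: "\<And>k. k \<ge> 1 \<Longrightarrow> x k = \<alpha> k *\<^sub>R z k + (1 - \<alpha> k) *\<^sub>R y k"
    and xt_fix: "xt \<in> {u. T u = u}"
  shows "(\<forall>k\<ge>1.
            norm (x k - x (k - 1)) \<le>
              2 * max (norm (x 0 - xt)) (norm (xt - S xt) / (1 - \<beta>))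
                * real_of_int \<lfloor>2 / (1 - \<beta>)\<rfloor> / ((1 - \<beta>) * real k)
          \<and> norm (y k - x (k - 1)) \<le>
              2 * max (norm (x 0 - xt)) (norm (xt - S xt) / (1 - \<beta>))
                * (real_of_int \<lfloor>2 / (1 - \<beta>)\<rfloor> + 2) / ((1 - \<beta>) * real k))
       \<and> ((\<lambda>k. norm (x k - x (k - 1))) \<longlonglongrightarrow> 0)
       \<and> ((\<lambda>k. norm (y k - x (k - 1))) \<longlonglongrightarrow> 0)"
proof -
  define g where "g = 1 - \<beta>"
  define C where "C = max (norm (x 0 - xt)) (norm (xt - S xt) / (1 - \<beta>))"
  define J where "J = real_of_int \<lfloor>2 / (1 - \<beta>)\<rfloor>"
  have g0: "g > 0" and g1: "g \<le> 1" using beta by (auto simp: g_def)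
  have C0: "C \<ge> 0" by (simp add: C_def le_max_iff_disj)
  have Txt: "T xt = xt" using xt_fix by simp
  have Sxt: "norm (S xt - xt) \<le> g * C"
  proof -
    have "norm (xt - S xt) / g \<le> C" by (simp add: C_def g_def)
    hence "norm (xt - S xt) \<le> g * C" using g0 by (simp add: field_simps)
    thus ?thesis by (simp add: norm_minus_commute)
  qed
  have twog: "2 / g \<ge> 2" using g0 g1 by (simp add: field_simps)
  have J2: "J \<ge> 2"
  proof -
    have "\<lfloor>2 / g\<rfloor> \<ge> 2" using twog by (metis floor_mono floor_numeral)
    thus ?thesis by (simp add: J_def g_def)
  qed
  have Jle: "J \<le> 2 / g" by (simp add: J_def g_def)
  have Jgt: "2 / g < J + 1" unfolding J_def g_def by linarith
  have al_pos: "\<alpha> k > 0" and al_le1: "\<alpha> k \<le> 1" and al_le: "\<alpha> k \<le> 2 / (real k * g)"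
    if "k \<ge> 1" for k
    using alpha_def[OF that] g0 that by (auto simp: g_def)
  have al_big: "\<alpha> k = 2 / (real k * g)" if "real k > J" for k
  proof -
    have k1: "k \<ge> 1" using that J2 by linarith
    have "\<lfloor>2 / g\<rfloor> < int k" using that by (simp add: J_def g_def)
    hence "\<lfloor>2 / g\<rfloor> + 1 \<le> int k" by linarith
    hence "J + 1 \<le> real k" unfolding J_def g_def by linarith
    hence "real k > 2 / g" using Jgt by linarith
    hence "real k * g > 2" using g0 by (simp add: field_simps)
    hence "2 / (real k * g) < 1" by simp
    thus ?thesis using alpha_def[OF k1] by (simp add: g_def)
  qed
  have al_one: "\<alpha> k = 1" if "real k \<le> J" "k \<ge> 1" for k
  proof -
    have "real k * g \<le> J * g" using that g0 by (simp add: mult_right_mono)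
    moreover have "J * g \<le> 2" using Jle g0 by (simp add: field_simps)
    ultimately have "real k * g \<le> 2" by linarith
    moreover have "real k * g > 0" using that g0 by simp
    ultimately have "2 / (real k * g) \<ge> 1" by simp
    thus ?thesis using alpha_def[OF that(2)] by (simp add: g_def)
  qed
  have Sbd: "norm (S u - xt) \<le> C" if "norm (u - xt) \<le> C" for u
  proof -
    have "norm (S u - xt) \<le> norm (S u - S xt) + norm (S xt - xt)"
      using norm_triangle_ineq[of "S u - S xt" "S xt - xt"] by simp
    also have "\<dots> \<le> \<beta> * norm (u - xt) + g * C" using S_contr Sxt by (meson add_mono)
    also have "\<dots> \<le> \<beta> * C + g * C" using that beta by (simp add: mult_left_mono)
    also have "\<dots> = C" by (simp add: g_def algebra_simps)
    finally show ?thesis .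
  qed
  have Tbd: "norm (T u - xt) \<le> C" if "norm (u - xt) \<le> C" for u
    using T_nonexp[of u xt] Txt that by simp
  have xbd: "norm (x k - xt) \<le> C" for k
  proof (induction k)
    case 0 thus ?case by (simp add: C_def)
  next
    case (Suc n)
    have k1: "Suc n \<ge> 1" by simp
    have zb: "norm (z (Suc n) - xt) \<le> C" using z_def[OF k1] Sbd Suc by simp
    have yb: "norm (y (Suc n) - xt) \<le> C" using y_def[OF k1] Tbd Suc by simp
    define a where "a = \<alpha> (Suc n)"
    have a0: "0 \<le> a" "a \<le> 1" using al_pos[OF k1] al_le1[OF k1] by (auto simp: a_def)
    have "x (Suc n) - xt = a *\<^sub>R (z (Suc n) - xt) + (1 - a) *\<^sub>R (y (Suc n) - xt)"
      using x_def[OF k1] by (simp add: a_def algebra_simps)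
    hence "norm (x (Suc n) - xt) \<le> a * norm (z (Suc n) - xt) + (1 - a) * norm (y (Suc n) - xt)"
      using a0 norm_triangle_ineq[of "a *\<^sub>R (z (Suc n) - xt)" "(1 - a) *\<^sub>R (y (Suc n) - xt)"] by simp
    also have "\<dots> \<le> a * C + (1 - a) * C"
      using a0 zb yb by (intro add_mono mult_left_mono) auto
    finally show ?case by (simp add: algebra_simps)
  qed
  have zbd: "norm (z k - xt) \<le> C" and ybd: "norm (y k - xt) \<le> C" if "k \<ge> 1" for k
    using z_def[OF that] y_def[OF that] Sbd Tbd xbd by auto
  have zy: "norm (z k - y k) \<le> 2 * C" if "k \<ge> 1" for k
  proof -
    have "norm (z k - y k) \<le> norm (z k - xt) + norm (y k - xt)"
      using norm_triangle_ineq4[of "z k - xt" "y k - xt"] by simp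
    thus ?thesis using zbd[OF that] ybd[OF that] by simp
  qed
  have triv: "norm (x (Suc n) - x n) \<le> 2 * C" for n
  proof -
    have "norm (x (Suc n) - x n) \<le> norm (x (Suc n) - xt) + norm (x n - xt)"
      using norm_triangle_ineq4[of "x (Suc n) - xt" "x n - xt"] by simp
    thus ?thesis using xbd[of "Suc n"] xbd[of n] by simp
  qed
  have trivJ: "norm (x (Suc n) - x n) \<le> 2 * C * J / (g * real (Suc n))"
    if "real (Suc n) \<le> J" for n
  proof -
    have "g * real (Suc n) \<le> J" using g1 that
      by (smt (verit) mult_left_le_one_le of_nat_0_le_iff g0)
    moreover have "g * real (Suc n) > 0" using g0 by simp
    ultimately have "1 \<le> J / (g * real (Suc n))" by (simp add: le_divide_eq del: of_nat_Suc)
    hence "2 * C * 1 \<le> 2 * C * (J / (g * real (Suc n)))" using C0 by (intro mult_left_mono) auto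
    thus ?thesis using triv[of n] by simp
  qed
  have main: "norm (x (Suc n) - x n) \<le> 2 * C * J / (g * real (Suc n))" for n
  proof (induction n)
    case 0
    show ?case using trivJ[of 0] J2 by simp
  next
    case (Suc n)
    show ?case
    proof (cases "real (Suc (Suc n)) \<le> J")
      case True thus ?thesis using trivJ by blast
    next
      case False
      define k where "k = Suc (Suc n)"
      define a where "a = \<alpha> k"
      define b where "b = \<alpha> (Suc n)"
      define D where "D = norm (x (Suc n) - x n)"
      have k1: "k \<ge> 1" and k2: "Suc n \<ge> 1" by (auto simp: k_def)
      have ha: "a = 2 / (real k * g)" using al_big False by (simp add: a_def k_def)
      have hb: "b \<le> 2 / (real (Suc n) * g)" using al_le[OF k2] by (simp add: b_def)
      have hba: "a \<le> b"
      proof -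
        have "2 / (real k * (1 - \<beta>)) \<le> 2 / (real (Suc n) * (1 - \<beta>))"
          using g0 by (intro divide_left_mono mult_right_mono) (auto simp: k_def g_def)
        thus ?thesis using alpha_def[OF k1] alpha_def[OF k2] by (simp add: a_def b_def)
      qed
      have a0: "0 \<le> a" "a \<le> 1" using al_pos[OF k1] al_le1[OF k1] by (auto simp: a_def)
      have xk: "x k = a *\<^sub>R z k + (1 - a) *\<^sub>R y k" using x_def[OF k1] by (simp add: a_def)
      have xk1: "x (Suc n) = b *\<^sub>R z (Suc n) + (1 - b) *\<^sub>R y (Suc n)" using x_def[OF k2] by (simp add: b_def)
      have eq: "x k - x (Suc n) = a *\<^sub>R (z k - z (Suc n)) + (1 - a) *\<^sub>R (y k - y (Suc n))
          + (a - b) *\<^sub>R (z (Suc n) - y (Suc n))"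
        unfolding xk xk1 by (simp add: algebra_simps)
      have zz: "norm (z k - z (Suc n)) \<le> \<beta> * D"
        using z_def[OF k1] z_def[OF k2] S_contr by (simp add: k_def D_def)
      have yy: "norm (y k - y (Suc n)) \<le> D"
        using y_def[OF k1] y_def[OF k2] T_nonexp by (simp add: k_def D_def)
      have "norm (x k - x (Suc n)) \<le> norm (a *\<^sub>R (z k - z (Suc n))) + norm ((1 - a) *\<^sub>R (y k - y (Suc n)))
          + norm ((a - b) *\<^sub>R (z (Suc n) - y (Suc n)))"
        unfolding eq by (meson add_mono norm_triangle_ineq order_trans order_refl)
      also have "\<dots> = a * norm (z k - z (Suc n)) + (1 - a) * norm (y k - y (Suc n))
          + (b - a) * norm (z (Suc n) - y (Suc n))" using a0 hba by simp
      also have "\<dots> \<le> a * (\<beta> * D) + (1 - a) * D + (b - a) * (2 * C)"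
        using a0 hba zz yy zy[OF k2] by (intro add_mono mult_left_mono) auto
      also have "\<dots> = (1 - a * g) * D + (b - a) * (2 * C)" by (simp add: g_def algebra_simps)
      also have "\<dots> \<le> (1 - a * g) * (2 * C * J / (g * real (Suc n)))
           + (2 / (real (Suc n) * g) - a) * (2 * C)"
      proof (intro add_mono mult_left_mono mult_right_mono)
        have "a * g = 2 / real k" using ha g0 by simp
        moreover have "2 / real k \<le> 1" by (simp add: k_def)
        ultimately show "0 \<le> 1 - a * g" by simp
        show "D \<le> 2 * C * J / (g * real (Suc n))" using Suc by (simp add: D_def)
        show "b - a \<le> 2 / (real (Suc n) * g) - a" using hb by simp
        show "0 \<le> 2 * C" using C0 by simp
      qed
      also have "\<dots> \<le> 2 * C * J / (g * real k)"
      proof -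
        define m where "m = real (Suc n)"
        define p where "p = real k"
        have mk: "p = m + 1" by (simp add: m_def k_def p_def)
        have m1: "m \<ge> 1" by (simp add: m_def)
        have nz: "m \<noteq> 0" "p \<noteq> 0" "g \<noteq> 0" using m1 mk g0 by auto
        have ha': "a = 2 / (p * g)" using ha by (simp add: p_def)
        have "(1 - a * g) * (2 * C * J / (g * m)) + (2 / (m * g) - a) * (2 * C)
            = 2 * C / (g * m * p) * ((p - 2) * J + 2 * (p - m))"
          unfolding ha' using nz by (simp add: field_simps)
        also have "\<dots> = 2 * C / (g * m * p) * ((m - 1) * J + 2)" using mk by simp
        also have "\<dots> \<le> 2 * C / (g * m * p) * (m * J)"
          using m1 J2 g0 C0 mk by (intro mult_left_mono) (auto simp: algebra_simps)
        also have "\<dots> = 2 * C * J / (g * p)"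
          using nz by (simp add: field_simps)
        finally show ?thesis by (simp add: m_def p_def)
      qed
      finally show ?thesis by (simp add: k_def)
    qed
  qed
  have B1: "norm (x k - x (k - 1)) \<le> 2 * C * J / (g * real k)" if "k \<ge> 1" for k
    using main[of "k - 1"] that by simp
  have B2: "norm (y k - x (k - 1)) \<le> 2 * C * (J + 2) / (g * real k)" if k1: "k \<ge> 1" for k
  proof -
    have "y k - x k = \<alpha> k *\<^sub>R (y k - z k)" using x_def[OF k1] by (simp add: algebra_simps)
    hence "norm (y k - x k) = \<alpha> k * norm (z k - y k)"
      using al_pos[OF k1] by (simp add: norm_minus_commute)
    also have "\<dots> \<le> 2 / (real k * g) * (2 * C)"
      using al_pos[OF k1] al_le[OF k1] zy[OF k1] C0 g0 by (intro mult_mono) auto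
    finally have h: "norm (y k - x k) \<le> 2 / (real k * g) * (2 * C)" .
    have "norm (y k - x (k - 1)) \<le> norm (y k - x k) + norm (x k - x (k - 1))"
      using norm_triangle_ineq[of "y k - x k" "x k - x (k - 1)"] by simp
    also have "\<dots> \<le> 2 / (real k * g) * (2 * C) + 2 * C * J / (g * real k)"
      using h B1[OF k1] by simp
    also have "\<dots> = 2 * C * (J + 2) / (g * real k)" by (simp add: field_simps add_divide_distrib)
    finally show ?thesis .
  qed
  have L: "(\<lambda>k. norm (f k)) \<longlonglongrightarrow> 0"
    if "\<And>k. k \<ge> 1 \<Longrightarrow> norm (f k) \<le> A / (g * real k)" for f :: "nat \<Rightarrow> real ^ 'n" and A
  proof -
    have "(\<lambda>k. norm (f k)) \<longlonglongrightarrow> 0 \<longleftrightarrow> f \<longlonglongrightarrow> 0" by (rule tendsto_norm_zero_iff)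
    moreover have "f \<longlonglongrightarrow> 0"
    proof (rule Lim_null_comparison)
      show "\<forall>\<^sub>F k in sequentially. norm (f k) \<le> (A / g) / real k"
        using eventually_ge_at_top[of 1]
      proof (rule eventually_mono)
        fix k :: nat assume "1 \<le> k"
        thus "norm (f k) \<le> (A / g) / real k" using that[of k] by simp
      qed
      show "(\<lambda>k. (A / g) / real k) \<longlonglongrightarrow> 0" by (rule lim_const_over_n)
    qed
    ultimately show ?thesis by simp
  qed
  have e: "g * real k = (1 - \<beta>) * real k" for k by (simp add: g_def)
  show ?thesis
    using B1 B2 L[OF B1] L[OF B2] unfolding C_def[symmetric] J_def[symmetric] e by simp
qed

end
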